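(* Let $\Delta,\Gamma\in\mathbb{R}$ with $2+3\Delta\Gamma\neq 0$, define $$\sigma:=3\Gamma(1+\Delta\Gamma),\qquad s_1^2:=\Gamma\,\frac{2+3\Delta\Gamma}{1+\Delta\Gamma+(1-\Delta)(1+3\Delta\Gamma+3\Delta^2\Gamma^2)},$$ and assume that the denominator is nonzero and $s_1^2>0$ (this holds in particular whenever $0\le\Delta\le1$ and $\Gamma>0$). For a unit vector $\mathbf{k}\in S^2$, define the linear map $P(\mathbf{k})$ on state vectors $V=(K_{ab},N_{ab},a_b)\in\mathbb{R}^{9}\times\mathbb{R}^9\times\mathbb{R}^3$ by $P(\mathbf{k})V=(\tilde K_{ab},\tilde N_{ab},\tilde a_b)$ with $$\tilde K_{ab}=\varepsilon_a{}^{cd}k_cN_{db}+k_aa_b-\frac{\Delta}{2+3\Delta\Gamma}\delta_{ab}\Big[(\Gamma-\sigma)\varepsilon^{fcd}k_fN_{cd}+(1+\Gamma+\Delta\sigma)k^ca_c\Big],$$ $$\tilde N_{ab}=-\varepsilon_a{}^{cd}k_cK_{db}+\Delta\Gamma\,\varepsilon_{ab}{}^ck_cK,\qquad \tilde a_b=s_1^2k^aK_{ab}+\big[\Gamma-s_1^2(1+\Delta\Gamma)\big]k_bK.$$ Let $H$ be the ($\mathbf{k}$-independent) symmetric positive-definite matrix defined by $V^THV:=K^{ab}K_{ab}+N^{ab}N_{ab}+s_1^{-2}a^ba_b$. Then $V_1^THP(\mathbf{k})V_2=V_2^THP(\mathbf{k})V_1$ for all state vectors $V_1,V_2$ and all $\mathbf{k}\in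 S^2$, i.e. $HP(\mathbf{k})=P(\mathbf{k})^TH$; thus the family $P(\mathbf{k})$ is symmetric hyperbolic.
   Context: Indices $a,b,c,d,f\in\{1,2,3\}$ are raised and lowered with $\delta_{ab}$, repeated indices are summed, $\varepsilon_{abc}$ is the totally antisymmetric symbol with $\varepsilon_{123}=1$, and $K:=\delta^{ab}K_{ab}$. $K_{ab}$ and $N_{ab}$ are arbitrary (not necessarily symmetric) real $3\times3$ matrices. (This symbol corresponds to the Einstein-æther coupling choice $c_1=\Delta s_1^2$, $c_2=\Delta\Gamma$, $c_{13}=0$, $c_{14}=\Delta$.) *)

theory Defs
  imports Main "HOL-Analysis.Analysis"
begin

text \<open>Spatial indices range over {1,2,3}; all index sums are over this set.
  Indices are raised/lowered with the Kronecker delta, so up/down positions coincide.\<close>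

abbreviation idx :: "nat set" where "idx \<equiv> {1..3}"

definition eps :: "nat \<Rightarrow> nat \<Rightarrow> nat \<Rightarrow> real" where
  "eps i j l = (if (i,j,l) \<in> {(1,2,3),(2,3,1),(3,1,2)} then 1
               else if (i,j,l) \<in> {(1,3,2),(3,2,1),(2,1,3)} then -1 else 0)"

definition kdelta :: "nat \<Rightarrow> nat \<Rightarrow> real" where
  "kdelta i j = (if i = j then 1 else 0)"

text \<open>State vector V = (K_ab, N_ab, a_b); only the components with indices in {1,2,3} matter.\<close>
type_synonym state = "(nat \<Rightarrow> nat \<Rightarrow> real) \<times> (nat \<Rightarrow> nat \<Rightarrow> real) \<times> (nat \<Rightarrow> real)"

definition sigma :: "real \<Rightarrow> real \<Rightarrow> real" where
  "sigma D G = 3 * G * (1 + D * G)"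

definition s1den :: "real \<Rightarrow> real \<Rightarrow> real" where
  "s1den D G = 1 + D * G + (1 - D) * (1 + 3 * D * G + 3 * D\<^sup>2 * G\<^sup>2)"

definition s1sq :: "real \<Rightarrow> real \<Rightarrow> real" where
  "s1sq D G = G * (2 + 3 * D * G) / s1den D G"

definition trK :: "(nat \<Rightarrow> nat \<Rightarrow> real) \<Rightarrow> real" where
  "trK K = (\<Sum>c\<in>idx. K c c)"

definition Pmap :: "real \<Rightarrow> real \<Rightarrow> (nat \<Rightarrow> real) \<Rightarrow> state \<Rightarrow> state" where
  "Pmap D G k V = (case V of (K, N, a) \<Rightarrow>
     ((\<lambda>i j. (\<Sum>c\<in>idx. \<Sum>d\<in>idx. eps i c d * k c * N d j) + k i * a j
         - D / (2 + 3 * D * G) * kdelta i j *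
           ((G - sigma D G) * (\<Sum>f\<in>idx. \<Sum>c\<in>idx. \<Sum>d\<in>idx. eps f c d * k f * N c d)
            + (1 + G + D * sigma D G) * (\<Sum>c\<in>idx. k c * a c))),
      (\<lambda>i j. - (\<Sum>c\<in>idx. \<Sum>d\<in>idx. eps i c d * k c * K d j)
         + D * G * (\<Sum>c\<in>idx. eps i j c * k c) * trK K),
      (\<lambda>j. s1sq D G * (\<Sum>i\<in>idx. k i * K i j)
         + (G - s1sq D G * (1 + D * G)) * k j * trK K)))"

definition Hform :: "real \<Rightarrow> real \<Rightarrow> state \<Rightarrow> state \<Rightarrow> real" where
  "Hform D G V W = (case V of (K, N, a) \<Rightarrow> case W of (K', N', a') \<Rightarrow>
     (\<Sum>i\<in>idx. \<Sum>j\<in>idx. K i j * K' i j) + (\<Sum>i\<in>idx. \<Sum>j\<in>idx. N i j * N' i j)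
     + (1 / s1sq D G) * (\<Sum>j\<in>idx. a j * a' j))"

end

theory Submission imports Defs begin

lemma sum3: "(\<Sum>i\<in>{1..3::nat}. f i) = f 1 + f 2 + (f 3::real)"
proof -
  have "{1..3::nat} = {1,2,3}" by auto
  then show ?thesis by simp
qed

definition Pg :: "real \<Rightarrow> real \<Rightarrow> real \<Rightarrow> real \<Rightarrow> real \<Rightarrow> (nat \<Rightarrow> real) \<Rightarrow> state \<Rightarrow> state" where
  "Pg A c B e s k V = (case V of (K, N, a) \<Rightarrow>
     ((\<lambda>i j. (\<Sum>c\<in>idx. \<Sum>d\<in>idx. eps i c d * k c * N d j) + k i * a j
         - kdelta i j * (A * (\<Sum>f\<in>idx. \<Sum>c\<in>idx. \<Sum>d\<in>idx. eps f c d * k f * N c d)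
            + c * (\<Sum>c\<in>idx. k c * a c))),
      (\<lambda>i j. - (\<Sum>c\<in>idx. \<Sum>d\<in>idx. eps i c d * k c * K d j)
         + B * (\<Sum>c\<in>idx. eps i j c * k c) * trK K),
      (\<lambda>j. s * (\<Sum>i\<in>idx. k i * K i j)
         + e * k j * trK K)))"

definition Hg :: "real \<Rightarrow> state \<Rightarrow> state \<Rightarrow> real" where
  "Hg s V W = (case V of (K, N, a) \<Rightarrow> case W of (K', N', a') \<Rightarrow>
     (\<Sum>i\<in>idx. \<Sum>j\<in>idx. K i j * K' i j) + (\<Sum>i\<in>idx. \<Sum>j\<in>idx. N i j * N' i j)
     + (1 / s) * (\<Sum>j\<in>idx. a j * a' j))"

lemma gen: assumes "s \<noteq> 0"
  shows "Hg s V1 (Pg (-B) c B (-(s*c)) s k V2) = Hg s V2 (Pg (-B) c B (-(s*c)) s k V1)"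
proof -
  obtain K1 N1 a1 where v1: "V1 = (K1,N1,a1)" by (cases V1) auto
  obtain K2 N2 a2 where v2: "V2 = (K2,N2,a2)" by (cases V2) auto
  show ?thesis using assms unfolding v1 v2 Hg_def Pg_def trK_def
    apply (simp only: sum3 prod.case)
    apply (simp add: eps_def kdelta_def)
    apply (simp add: field_simps)
    done
qed

lemma Pm: "Pmap D G k V = Pg (D/(2+3*D*G)*(G - sigma D G)) (D/(2+3*D*G)*(1+G+D * sigma D G)) (D*G) (G - s1sq D G*(1+D*G)) (s1sq D G) k V"
proof -
  have r: "\<And>u kd p q X Y::real. u * kd * (p*X + q*Y) = kd*((u*p)*X + (u*q)*Y)" by (simp add: algebra_simps)
  show ?thesis unfolding Pmap_def Pg_def by (cases V) (simp only: r prod.case)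
qed

lemma e1: assumes "2 + 3 * D * G \<noteq> 0" shows "D/(2+3*D*G)*(G - sigma D G) = - (D*G)"
  using assms unfolding sigma_def by (simp add: field_simps)

lemma e2: assumes "2 + 3 * D * G \<noteq> 0" "s1den D G \<noteq> 0"
  shows "G - s1sq D G*(1+D*G) = - (s1sq D G * (D/(2+3*D*G)*(1+G+D * sigma D G)))"
proof -
  have f: "s1den D G - (2+3*D*G)*(1+D*G) = -D*(1+G+D * sigma D G)"
    by (simp add: s1den_def sigma_def power2_eq_square algebra_simps)
  have "G - s1sq D G*(1+D*G) = G*(s1den D G - (2+3*D*G)*(1+D*G)) / s1den D G"
    using assms unfolding s1sq_def by (simp add: field_simps)
  also have "\<dots> = - (s1sq D G * (D/(2+3*D*G)*(1+G+D * sigma D G)))"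
  proof -
    have nz: "s1den D G * (2+3*D*G) \<noteq> 0" using assms by simp
    show ?thesis unfolding f using assms nz unfolding s1sq_def by (simp add: field_simps)
  qed
  finally show ?thesis .
qed

theorem mainTheorem4:
  fixes D G :: real and k :: "nat \<Rightarrow> real" and V1 V2 :: state
  assumes "2 + 3 * D * G \<noteq> 0"
    and "s1den D G \<noteq> 0"
    and "s1sq D G > 0"
    and "(\<Sum>i\<in>{1..3::nat}. (k i)\<^sup>2) = 1"
  shows "Hform D G V1 (Pmap D G k V2) = Hform D G V2 (Pmap D G k V1)"
proof -
  have H: "Hform D G = Hg (s1sq D G)" unfolding Hform_def Hg_def by (intro ext) simp
  show ?thesis unfolding H Pm e1[OF assms(1)] e2[OF assms(1,2)]
    by (rule gen) (use assms(3) in simp)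
qed
end
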